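(* Let $d\geq 3$. If $G$ is a connected $d$-regular graph of girth $g\geq 3$ on $n$ vertices, then \[ \mathrm{kiss}(G) \leq \frac{n(n(d - 2)+2)}{2\log_{d-1}\left(\frac{n(d-2) + 2}{d}\right)+1} \quad\text{if } g \text{ is odd}, \] and \[ \mathrm{kiss}(G) \leq \frac{nd(n(d -2)+2)}{4\log_{d-1}\left(\frac{n(d-2) + 2}{2}\right)} \quad\text{if } g \text{ is even}, \] with equality if and only if $G$ is a Moore graph.
   Context: Graphs are finite and may have loops and multiple edges. A walk is a sequence of oriented edges, consecutive ones sharing endpoints; a closed geodesic is a closed walk (up to cyclic permutation) that never immediately backtracks along an edge, including at the base point. The girth is the smallest length of a closed geodesic. The kissing number $\mathrm{kiss}(G)$ is the number of distinct shortest oriented cycles in $G$ (oriented cycles of length equal to the girth). A Moore graph is a connected $d$-regular graph of girth $g$ whose number of vertices equals $1 + d \sum_{j=0}^{(g-3)/2} (d-1)^j$ if $g$ is odd and $2 \sum_{j=0}^{(g-2)/2} (d-1)^j$ if $g$ is even. *)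

theory Defs
  imports Complex_Main
begin

text \<open>A finite multigraph (loops and multiple edges allowed) in Serre's dart form:
  V is the vertex set, D the set of oriented edges (darts), rv the orientation-reversing
  fixed-point-free involution, and tail d the tail (initial vertex) of the dart d.
  Each undirected edge corresponds to a pair {d, rv d}; a loop is such a pair with
  tail d = hd d.\<close>

definition mgraph :: "'v set \<Rightarrow> 'e set \<Rightarrow> ('e \<Rightarrow> 'e) \<Rightarrow> ('e \<Rightarrow> 'v) \<Rightarrow> bool" where
  "mgraph V D rv tail \<longleftrightarrow> finite V \<and> finite D \<and>
     (\<forall>e\<in>D. rv e \<in> D \<and> rv e \<noteq> e \<and> rv (rv e) = e \<and> tail e \<in> V)"

definition hd_of :: "('e \<Rightarrow> 'e) \<Rightarrow> ('e \<Rightarrow> 'v) \<Rightarrow> 'e \<Rightarrow> 'v" where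
  "hd_of rv tail e = tail (rv e)"

definition connected_mg :: "'v set \<Rightarrow> 'e set \<Rightarrow> ('e \<Rightarrow> 'e) \<Rightarrow> ('e \<Rightarrow> 'v) \<Rightarrow> bool" where
  "connected_mg V D rv tail \<longleftrightarrow> V \<noteq> {} \<and>
     (\<forall>u\<in>V. \<forall>v\<in>V. (u, v) \<in> {(tail e, hd_of rv tail e) | e. e \<in> D}\<^sup>*)"

text \<open>degree of v = number of darts with tail v (a loop contributes 2)\<close>
definition regular_mg :: "'v set \<Rightarrow> 'e set \<Rightarrow> ('e \<Rightarrow> 'v) \<Rightarrow> nat \<Rightarrow> bool" where
  "regular_mg V D tail d \<longleftrightarrow> (\<forall>v\<in>V. card {e\<in>D. tail e = v} = d)"

definition closed_geodesic :: "'e set \<Rightarrow> ('e \<Rightarrow> 'e) \<Rightarrow> ('e \<Rightarrow> 'v) \<Rightarrow> 'e list \<Rightarrow> bool" where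
  "closed_geodesic D rv tail ds \<longleftrightarrow> ds \<noteq> [] \<and> set ds \<subseteq> D \<and>
     (\<forall>i<length ds. hd_of rv tail (ds ! i) = tail (ds ! ((i + 1) mod length ds)) \<and>
                    ds ! ((i + 1) mod length ds) \<noteq> rv (ds ! i))"

definition girth_mg :: "'e set \<Rightarrow> ('e \<Rightarrow> 'e) \<Rightarrow> ('e \<Rightarrow> 'v) \<Rightarrow> nat" where
  "girth_mg D rv tail = (LEAST k. \<exists>ds. closed_geodesic D rv tail ds \<and> length ds = k)"

definition cyc_class :: "'e list \<Rightarrow> 'e list set" where
  "cyc_class ds = {rotate k ds | k. k < length ds}"

text \<open>kissing number: number of closed geodesics of length the girth, up to cyclic
  permutation (orientation matters)\<close>
definition kiss_mg :: "'e set \<Rightarrow> ('e \<Rightarrow> 'e) \<Rightarrow> ('e \<Rightarrow> 'v) \<Rightarrow> nat" where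
  "kiss_mg D rv tail = card (cyc_class ` {ds. closed_geodesic D rv tail ds \<and>
                                            length ds = girth_mg D rv tail})"

definition moore_number :: "nat \<Rightarrow> nat \<Rightarrow> nat" where
  "moore_number d g = (if odd g then 1 + d * (\<Sum>j\<le>(g - 3) div 2. (d - 1) ^ j)
                       else 2 * (\<Sum>j\<le>(g - 2) div 2. (d - 1) ^ j))"

definition moore_graph :: "'v set \<Rightarrow> 'e set \<Rightarrow> ('e \<Rightarrow> 'e) \<Rightarrow> ('e \<Rightarrow> 'v) \<Rightarrow> bool" where
  "moore_graph V D rv tail \<longleftrightarrow> (\<exists>d. connected_mg V D rv tail \<and> regular_mg V D tail d \<and>
      card V = moore_number d (girth_mg D rv tail))"

end

theory Submission
  imports Defs
begin



lemma ln2_gt: "ln 2 > (2/3::real)"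
proof -
  obtain t where t: "\<bar>t\<bar> \<le> \<bar>2/3::real\<bar>" and e: "exp (2/3::real) = (\<Sum>m<4. ((2/3) ^ m) / fact m) + (exp t / fact 4) * (2/3) ^ 4"
    using Maclaurin_exp_le[of "2/3::real" 4] by blast
  have "exp t \<le> exp (2/3::real)" using t by simp
  then have "exp (2/3::real) < 2" using e by (simp add: eval_nat_numeral fact_numeral)
  then have "ln (exp (2/3::real)) < ln 2" by (subst ln_less_cancel_iff) auto
  then show ?thesis by simp
qed

lemma phi_mono:
  fixes b a x :: real
  assumes b: "2 \<le> b" and a: "b \<le> a" and ax: "a < x"
  shows "a / (2 * log b a + 1) < x / (2 * log b x + 1)"
proof -
  have lb: "ln b > 2/3" using ln2_gt b by (smt (verit) ln_le_cancel_iff)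
  have der: "\<exists>y. ((\<lambda>t. t / (2 * (ln t / ln b) + 1)) has_real_derivative y) (at t) \<and> y > 0"
    if t: "a \<le> t" "t \<le> x" for t
  proof -
    have t0: "t > 0" using t a b by simp
    have lt: "ln t \<ge> ln b" using t a b by simp
    have den: "2 * (ln t / ln b) + 1 > 0" using lt lb by (simp add: divide_nonneg_pos add_pos_nonneg)
    have num: "1 * (2 * (ln t / ln b) + 1) - t * (2 * ((1/t) / ln b) + 0) > 0"
    proof -
      have "ln t / ln b \<ge> 1" using lt lb by simp
      moreover have "t * (2 * ((1/t) / ln b) + 0) = 2 / ln b" using t0 by simp
      moreover have "2 / ln b < 3" using lb by (simp add: divide_less_eq)
      moreover have "\<And>q c::real. 1 \<le> q \<Longrightarrow> c < 3 \<Longrightarrow> 0 < 1 * (2 * q + 1) - c" by simp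
      ultimately have "0 < 1 * (2 * (ln t / ln b) + 1) - 2 / ln b" by blast
      then show ?thesis using \<open>t * (2 * ((1/t) / ln b) + 0) = 2 / ln b\<close> by simp
    qed
    have d1: "((\<lambda>t. ln t / ln b) has_real_derivative (1/t) / ln b) (at t)"
      by (rule DERIV_cdivide[OF DERIV_ln_divide[OF t0]])
    have d2: "((\<lambda>t. 2 * (ln t / ln b) + 1) has_real_derivative 2 * ((1/t) / ln b) + 0) (at t)"
      by (rule DERIV_add[OF DERIV_cmult[OF d1] DERIV_const])
    have "((\<lambda>t. t / (2 * (ln t / ln b) + 1)) has_real_derivative
        (1 * (2 * (ln t / ln b) + 1) - t * (2 * ((1/t) / ln b) + 0)) / ((2 * (ln t / ln b) + 1) * (2 * (ln t / ln b) + 1))) (at t)"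
      by (rule DERIV_divide[OF DERIV_ident d2]) (use den in simp)
    moreover have "(1 * (2 * (ln t / ln b) + 1) - t * (2 * ((1/t) / ln b) + 0)) / ((2 * (ln t / ln b) + 1) * (2 * (ln t / ln b) + 1)) > 0"
      by (rule divide_pos_pos[OF num mult_pos_pos[OF den den]])
    ultimately show ?thesis by blast
  qed
  have "a / (2 * (ln a / ln b) + 1) < x / (2 * (ln x / ln b) + 1)"
    using DERIV_pos_imp_increasing[OF ax der] by blast
  then show ?thesis by (simp add: log_def)
qed

lemma psi_mono:
  fixes b a x :: real
  assumes b: "2 \<le> b" and a: "4 \<le> a" and ax: "a < x"
  shows "a / log b a < x / log b x"
proof -
  have lb: "ln b > 0" using b by simp
  have e3: "exp 1 < (4::real)" using exp_le by simp
  have der: "\<exists>y. ((\<lambda>t. t / (ln t / ln b)) has_real_derivative y) (at t) \<and> y > 0"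
    if t: "a \<le> t" "t \<le> x" for t
  proof -
    have t0: "t > 0" using t a by simp
    have lt: "ln t > 1"
    proof -
      have "exp 1 < t" using e3 t a by simp
      then have "ln (exp 1) < ln t" using t0 by (subst ln_less_cancel_iff) auto
      then show ?thesis by simp
    qed
    have den: "ln t / ln b > 0" using lt lb by simp
    have num: "1 * (ln t / ln b) - t * ((1/t) / ln b) > 0"
    proof -
      have "t * ((1/t) / ln b) = 1 / ln b" using t0 by simp
      moreover have "ln t / ln b > 1 / ln b" using lt lb by (simp add: divide_strict_right_mono)
      ultimately show ?thesis by linarith
    qed
    have d1: "((\<lambda>t. ln t / ln b) has_real_derivative (1/t) / ln b) (at t)"
      by (rule DERIV_cdivide[OF DERIV_ln_divide[OF t0]])
    have "((\<lambda>t. t / (ln t / ln b)) has_real_derivative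
        (1 * (ln t / ln b) - t * ((1/t) / ln b)) / ((ln t / ln b) * (ln t / ln b))) (at t)"
      by (rule DERIV_divide[OF DERIV_ident d1]) (use den in linarith)
    moreover have "(1 * (ln t / ln b) - t * ((1/t) / ln b)) / ((ln t / ln b) * (ln t / ln b)) > 0"
      by (rule divide_pos_pos[OF num mult_pos_pos[OF den den]])
    ultimately show ?thesis by blast
  qed
  have "a / (ln a / ln b) < x / (ln x / ln b)"
    using DERIV_pos_imp_increasing[OF ax der] by blast
  then show ?thesis by (simp add: log_def)
qed




locale mg =
  fixes V :: "'v set" and D :: "'e set" and rv :: "'e \<Rightarrow> 'e" and tl :: "'e \<Rightarrow> 'v" and d :: nat
  assumes mgr: "mgraph V D rv tl" and reg: "regular_mg V D tl d"
begin

abbreviation hv where "hv e \<equiv> hd_of rv tl e"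

definition J :: "'e \<Rightarrow> 'e \<Rightarrow> bool" where
  "J e f \<longleftrightarrow> hv e = tl f \<and> f \<noteq> rv e"

definition nb :: "'e list \<Rightarrow> bool" where
  "nb w \<longleftrightarrow> set w \<subseteq> D \<and> successively J w"

definition wk :: "'v \<Rightarrow> 'e list \<Rightarrow> 'v \<Rightarrow> bool" where
  "wk a w b \<longleftrightarrow> nb w \<and> (w = [] \<longrightarrow> a = b) \<and> (w \<noteq> [] \<longrightarrow> tl (hd w) = a \<and> hv (last w) = b)"

abbreviation g where "g \<equiv> girth_mg D rv tl"

abbreviation geo where "geo ds \<equiv> closed_geodesic D rv tl ds"

definition revw :: "'e list \<Rightarrow> 'e list" where
  "revw w = rev (map rv w)"

lemma finD: "finite D" and finV: "finite V" using mgr unfolding mgraph_def by auto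

lemma rvD: "e \<in> D \<Longrightarrow> rv e \<in> D" and rvne: "e \<in> D \<Longrightarrow> rv e \<noteq> e"
  and rvrv: "e \<in> D \<Longrightarrow> rv (rv e) = e" and tlV: "e \<in> D \<Longrightarrow> tl e \<in> V"
  using mgr unfolding mgraph_def by auto

lemma hv_rv: "e \<in> D \<Longrightarrow> hv (rv e) = tl e"
  by (simp add: hd_of_def rvrv)

lemma tl_rv: "tl (rv e) = hv e" by (simp add: hd_of_def)

lemma J_rev: "e \<in> D \<Longrightarrow> f \<in> D \<Longrightarrow> J (rv f) (rv e) \<longleftrightarrow> J e f"
  unfolding J_def using hv_rv tl_rv rvrv by metis

lemma geo_iff: "geo ds \<longleftrightarrow> ds \<noteq> [] \<and> nb ds \<and> J (last ds) (hd ds)"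
proof
  assume G: "geo ds"
  then have ne: "ds \<noteq> []" and sD: "set ds \<subseteq> D" and
    c: "\<And>i. i < length ds \<Longrightarrow> hv (ds ! i) = tl (ds ! ((i + 1) mod length ds)) \<and>
                    ds ! ((i + 1) mod length ds) \<noteq> rv (ds ! i)"
    unfolding closed_geodesic_def by auto
  have "successively J ds"
    unfolding successively_conv_nth J_def
  proof (intro allI impI)
    fix i assume "Suc i < length ds"
    then show "hv (ds ! i) = tl (ds ! Suc i) \<and> ds ! Suc i \<noteq> rv (ds ! i)"
      using c[of i] by simp
  qed
  moreover have "J (last ds) (hd ds)"
    using c[of "length ds - 1"] ne by (simp add: J_def last_conv_nth hd_conv_nth)
  ultimately show "ds \<noteq> [] \<and> nb ds \<and> J (last ds) (hd ds)" using ne sD by (simp add: nb_def)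
next
  assume A: "ds \<noteq> [] \<and> nb ds \<and> J (last ds) (hd ds)"
  then have s: "successively J ds" and sD: "set ds \<subseteq> D" by (auto simp: nb_def)
  have "\<forall>i<length ds. hv (ds ! i) = tl (ds ! ((i + 1) mod length ds)) \<and> ds ! ((i + 1) mod length ds) \<noteq> rv (ds ! i)"
  proof (intro allI impI)
    fix i assume i: "i < length ds"
    show "hv (ds ! i) = tl (ds ! ((i + 1) mod length ds)) \<and> ds ! ((i + 1) mod length ds) \<noteq> rv (ds ! i)"
    proof (cases "Suc i < length ds")
      case True
      then show ?thesis using successively_nth[OF s True] by (simp add: J_def)
    next
      case False
      then have "Suc i = length ds" using i by auto
      then have "i = length ds - 1" "(i+1) mod length ds = 0" by auto
      moreover have "hv (ds ! (length ds - 1)) = tl (ds ! 0)" "ds ! 0 \<noteq> rv (ds ! (length ds - 1))"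
        using A last_conv_nth[of ds] hd_conv_nth[of ds] by (auto simp: J_def)
      ultimately show ?thesis by simp
    qed
  qed
  then show "geo ds" unfolding closed_geodesic_def using A sD by auto
qed

lemma girth_le: "geo ds \<Longrightarrow> g \<le> length ds"
  unfolding girth_mg_def by (rule Least_le) auto

lemma nb_append: "nb (xs @ ys) \<longleftrightarrow> nb xs \<and> nb ys \<and> (xs = [] \<or> ys = [] \<or> J (last xs) (hd ys))"
  unfolding nb_def successively_append_iff by auto

lemma nb_Cons: "nb (x # xs) \<longleftrightarrow> x \<in> D \<and> nb xs \<and> (xs = [] \<or> J x (hd xs))"
  unfolding nb_def successively_Cons by auto

lemma nb_revw: "nb w \<Longrightarrow> nb (revw w)"
proof -
  assume "nb w"
  then have sD: "set w \<subseteq> D" and s: "successively J w" by (auto simp: nb_def)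
  have "successively (\<lambda>x y. J (rv y) (rv x)) w"
    using s by (rule successively_mono) (use sD J_rev in auto)
  then show ?thesis using sD rvD unfolding nb_def revw_def successively_rev successively_map by auto
qed

lemma wk_revw: "wk a w b \<Longrightarrow> wk b (revw w) a"
proof -
  assume A: "wk a w b"
  show ?thesis
  proof (cases "w = []")
    case True then show ?thesis using A by (simp add: wk_def revw_def nb_def)
  next
    case False
    then have "hd w \<in> D" "last w \<in> D" using A by (auto simp: wk_def nb_def)
    then show ?thesis using A False nb_revw unfolding wk_def
      by (auto simp: revw_def hd_rev last_rev hd_map last_map tl_rv hv_rv)
  qed
qed

lemma length_revw[simp]: "length (revw w) = length w" by (simp add: revw_def)

lemma closed_short: "wk a w a \<Longrightarrow> w \<noteq> [] \<Longrightarrow> length w < g \<Longrightarrow> False"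
proof (induction "length w" arbitrary: a w rule: less_induct)
  case less
  have nbw: "nb w" and t: "tl (hd w) = a" and h: "hv (last w) = a" using less.prems by (auto simp: wk_def)
  have sD: "set w \<subseteq> D" using nbw by (simp add: nb_def)
  show False
  proof (cases "J (last w) (hd w)")
    case True
    then have "geo w" using geo_iff nbw less.prems by auto
    then show False using girth_le less.prems by fastforce
  next
    case False
    then have eq: "hd w = rv (last w)" using t h by (simp add: J_def)
    obtain e w1 where w: "w = e # w1" using less.prems by (cases w) auto
    have eD: "e \<in> D" using sD w by auto
    show False
    proof (cases "w1 = []")
      case True
      then show False using eq w rvne[OF eD] by simp
    next
      case False
      then obtain w2 f where w1: "w1 = w2 @ [f]" by (metis rev_exhaust)
      have fe: "e = rv f" using eq w w1 by simp
      have fD: "f \<in> D" using sD w w1 by auto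
      show False
      proof (cases "w2 = []")
        case True
        then have "J e f" using nbw w w1 by (simp add: nb_Cons)
        then show False using fe rvrv[OF fD] by (simp add: J_def)
      next
        case False
        have nb2: "nb w2" and j1: "J e (hd w2)" and j2: "J (last w2) f"
          using nbw False unfolding w w1 by (auto simp: nb_Cons nb_append)
        have "wk (hv e) w2 (hv e)" unfolding wk_def using nb2 j1 j2 False
          by (auto simp: J_def fe tl_rv hv_rv[OF fD])
        moreover have "length w2 < length w" using w w1 by simp
        ultimately show False using less.hyps[of w2 "hv e"] False less.prems by auto
      qed
    qed
  qed
qed

lemma two_walks: "wk a p b \<Longrightarrow> wk a q b \<Longrightarrow> p \<noteq> q \<Longrightarrow> length p + length q < g \<Longrightarrow> False"
proof (induction "length p + length q" arbitrary: a p q b rule: less_induct)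
  case less
  show False
  proof (cases "p = [] \<or> q = []")
    case True
    then show False
    proof
      assume "p = []" then show False using less.prems closed_short[of a q] by (auto simp: wk_def)
    next
      assume "q = []" then show False using less.prems closed_short[of a p] by (auto simp: wk_def)
    qed
  next
    case False
    then have pne: "p \<noteq> []" and qne: "q \<noteq> []" by auto
    have nbp: "nb p" and nbq: "nb q" using less.prems by (auto simp: wk_def)
    show False
    proof (cases "hd p = hd q")
      case True
      obtain e p1 where p: "p = e # p1" using pne by (cases p) auto
      obtain q1 where q: "q = e # q1" using qne True p by (cases q) auto
      have "wk (hv e) p1 b" using less.prems(1) nbp unfolding p wk_def
        by (auto simp: nb_Cons J_def)
      moreover have "wk (hv e) q1 b" using less.prems(2) nbq unfolding q wk_def
        by (auto simp: nb_Cons J_def)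
      ultimately show False using less.hyps[of p1 q1] less.prems p q by auto
    next
      case hdne: False
      show False
      proof (cases "last p = last q")
        case True
        obtain p1 e where p: "p = p1 @ [e]" using pne by (metis rev_exhaust)
        obtain q1 where q: "q = q1 @ [e]" using qne True p by (metis last_snoc rev_exhaust)
        have "wk a p1 (tl e)" using less.prems(1) nbp unfolding p wk_def
          by (auto simp: nb_append J_def)
        moreover have "wk a q1 (tl e)" using less.prems(2) nbq unfolding q wk_def
          by (auto simp: nb_append J_def)
        ultimately show False using less.hyps[of p1 q1] less.prems p q by auto
      next
        case lastne: False
        have pD: "set p \<subseteq> D" and qD: "set q \<subseteq> D" using nbp nbq by (auto simp: nb_def)
        have lpD: "last p \<in> D" and lqD: "last q \<in> D" and hpD: "hd p \<in> D" and hqD: "hd q \<in> D"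
          using pD qD pne qne by auto
        let ?c = "p @ revw q"
        have r1: "hd (revw q) = rv (last q)" and r2: "last (revw q) = rv (hd q)"
          using qne by (auto simp: revw_def hd_rev last_rev hd_map last_map)
        have "hv (last p) = tl (rv (last q))" using less.prems pne qne by (simp add: wk_def tl_rv)
        moreover have "rv (last q) \<noteq> rv (last p)" using lastne rvrv[OF lpD] rvrv[OF lqD] by metis
        ultimately have "J (last p) (rv (last q))" unfolding J_def by simp
        moreover have "hv (rv (hd q)) = tl (hd p)" using less.prems pne qne by (simp add: wk_def hv_rv[OF hqD])
        moreover have "hd p \<noteq> rv (rv (hd q))" using hdne rvrv[OF hqD] by simp
        ultimately have "J (last p) (rv (last q)) \<and> J (rv (hd q)) (hd p)" unfolding J_def by simp
        moreover have "?c \<noteq> []" "revw q \<noteq> []" using pne qne by (auto simp: revw_def)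
        ultimately have "geo ?c" unfolding geo_iff using nbp nb_revw[OF nbq] pne r1 r2
          by (simp add: nb_append)
        then show False using girth_le less.prems by fastforce
      qed
    qed
  qed
qed

end


context mg begin

lemma geo_rotate: "geo ds \<Longrightarrow> geo (rotate k ds)"
proof -
  assume G: "geo ds"
  let ?L = "length ds"
  have ne: "ds \<noteq> []" and sD: "set ds \<subseteq> D" and
    c: "\<And>i. i < ?L \<Longrightarrow> hv (ds ! i) = tl (ds ! ((i + 1) mod ?L)) \<and> ds ! ((i + 1) mod ?L) \<noteq> rv (ds ! i)"
    using G unfolding closed_geodesic_def by auto
  have L: "?L > 0" using ne by simp
  have "\<forall>i<length (rotate k ds). hv (rotate k ds ! i) = tl (rotate k ds ! ((i + 1) mod length (rotate k ds))) \<and>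
      rotate k ds ! ((i + 1) mod length (rotate k ds)) \<noteq> rv (rotate k ds ! i)"
  proof (intro allI impI)
    fix i assume i: "i < length (rotate k ds)"
    let ?j = "(k + i) mod ?L"
    have j: "?j < ?L" using L by simp
    have e: "Suc ?j mod ?L = (k + Suc i mod ?L) mod ?L"
      by (metis mod_Suc_eq mod_add_right_eq add_Suc_right)
    show "hv (rotate k ds ! i) = tl (rotate k ds ! ((i + 1) mod length (rotate k ds))) \<and>
      rotate k ds ! ((i + 1) mod length (rotate k ds)) \<noteq> rv (rotate k ds ! i)"
      using c[OF j] i L by (simp add: nth_rotate e)
  qed
  then show ?thesis using ne sD unfolding closed_geodesic_def by simp
qed

lemma nb_take: "nb w \<Longrightarrow> nb (take k w)"
  using nb_append[of "take k w" "drop k w"] by simp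

lemma nb_drop: "nb w \<Longrightarrow> nb (drop k w)"
  using nb_append[of "take k w" "drop k w"] by simp

lemma rot_ne: "geo ds \<Longrightarrow> length ds = g \<Longrightarrow> 0 < k \<Longrightarrow> k < g \<Longrightarrow> rotate k ds \<noteq> ds"
proof
  assume G: "geo ds" and L: "length ds = g" and k: "0 < k" "k < g" and R: "rotate k ds = ds"
  have ne: "ds \<noteq> []" and nbd: "nb ds" using G geo_iff by auto
  have "rotate k ds ! 0 = ds ! k" using k L by (simp add: nth_rotate)
  then have e: "ds ! 0 = ds ! k" using R by simp
  let ?w = "take k ds"
  have "?w \<noteq> []" using k L ne by simp
  moreover have "length ?w < g" using k L by simp
  moreover have "wk (tl (ds ! 0)) ?w (tl (ds ! 0))"
  proof -
    have "hv (ds ! (k - 1)) = tl (ds ! k)"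
      using G k L unfolding closed_geodesic_def
      by (metis Suc_diff_1 Suc_eq_plus1 less_imp_diff_less mod_less)
    then show ?thesis unfolding wk_def using nb_take[OF nbd] k L e
      by (simp add: hd_conv_nth last_conv_nth min_def)
  qed
  ultimately show False using closed_short by blast
qed

definition R :: "'e list \<Rightarrow> 'e list set" where "R x = range (\<lambda>k. rotate k x)"

lemma cyc_R: "x \<noteq> [] \<Longrightarrow> cyc_class x = R x"
proof -
  assume ne: "x \<noteq> []"
  have "rotate k x \<in> cyc_class x" for k
    unfolding cyc_class_def using ne by (auto intro!: exI[of _ "k mod length x"] simp: rotate_conv_mod[symmetric])
  then show ?thesis unfolding cyc_class_def R_def by auto
qed

lemma R_sub: "y \<in> R x \<Longrightarrow> R y \<subseteq> R x"
  unfolding R_def by (auto simp: rotate_rotate)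

lemma R_back: "x \<in> R (rotate i x)"
proof (cases "x = []")
  case True then show ?thesis by (simp add: R_def)
next
  case False
  let ?L = "length x"
  have "rotate (?L - i mod ?L) (rotate i x) = rotate (?L - i mod ?L + i) x" by (simp add: rotate_rotate)
  also have "\<dots> = x"
  proof -
    have "(?L - i mod ?L + i) mod ?L = (?L - i mod ?L + i mod ?L) mod ?L" by (metis mod_add_right_eq)
    also have "?L - i mod ?L + i mod ?L = ?L" using False
      by (simp add: less_imp_le)
    finally have "(?L - i mod ?L + i) mod ?L = 0" by simp
    then show ?thesis by (simp add: rotate_conv_mod[of "?L - i mod ?L + i"])
  qed
  finally have "x = (\<lambda>k. rotate k (rotate i x)) (?L - i mod ?L)" by simp
  then show ?thesis unfolding R_def by (rule image_eqI) simp
qed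

lemma R_eq: "y \<in> R x \<Longrightarrow> R y = R x"
proof -
  assume y: "y \<in> R x"
  then obtain i where "y = rotate i x" unfolding R_def by auto
  then have "x \<in> R y" using R_back by simp
  then show ?thesis using R_sub y by blast
qed

definition S where "S = {ds. geo ds \<and> length ds = g}"

lemma finS: "finite S"
proof -
  have "S \<subseteq> {w. set w \<subseteq> D \<and> length w = g}" unfolding S_def closed_geodesic_def by auto
  then show ?thesis using finite_lists_length_eq[OF finD] finite_subset by blast
qed

lemma kiss_S: "kiss_mg D rv tl = card (cyc_class ` S)"
  unfolding kiss_mg_def S_def by simp

lemma card_S: "card S = g * kiss_mg D rv tl"
proof -
  have ne: "x \<in> S \<Longrightarrow> x \<noteq> []" for x unfolding S_def using geo_iff by auto
  have cs: "cyc_class x = R x" if "x \<in> S" for x using cyc_R ne that by blast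
  have sub: "R x \<subseteq> S" if "x \<in> S" for x using that geo_rotate unfolding S_def R_def by auto
  have U: "\<Union>(cyc_class ` S) = S"
  proof
    show "\<Union>(cyc_class ` S) \<subseteq> S" using sub cs by auto
    show "S \<subseteq> \<Union>(cyc_class ` S)"
    proof
      fix x assume "x \<in> S"
      then have "x \<in> cyc_class x" using cs[of x] unfolding R_def by (metis rangeI rotate0 id_apply)
      then show "x \<in> \<Union>(cyc_class ` S)" using \<open>x \<in> S\<close> by blast
    qed
  qed
  have card_c: "card (cyc_class x) = g" if xS: "x \<in> S" for x
  proof -
    have L: "length x = g" using xS unfolding S_def by simp
    have "inj_on (\<lambda>k. rotate k x) {..<g}"
    proof (rule inj_onI)
      fix i j assume i: "i \<in> {..<g}" and j: "j \<in> {..<g}" and e: "rotate i x = rotate j x"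
      show "i = j"
      proof (rule ccontr)
        assume "i \<noteq> j"
        then consider "i < j" | "j < i" by linarith
        then show False
        proof cases
          case 1
          have "rotate (j - i) (rotate i x) = rotate j x" by (simp add: rotate_rotate 1 less_imp_le)
          with e have "rotate (j - i) (rotate j x) = rotate j x" by simp
          moreover have "geo (rotate j x)" using geo_rotate xS unfolding S_def by blast
          moreover have "j - i < g" "0 < j - i" "length (rotate j x) = g" using 1 j L by auto
          ultimately show False using rot_ne[of "rotate j x" "j - i"] by blast
        next
          case 2
          have "rotate (i - j) (rotate j x) = rotate i x" by (simp add: rotate_rotate 2 less_imp_le)
          with e have "rotate (i - j) (rotate i x) = rotate i x" by simp
          moreover have "geo (rotate i x)" using geo_rotate xS unfolding S_def by blast
          moreover have "i - j < g" "0 < i - j" "length (rotate i x) = g" using 2 i L by auto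
          ultimately show False using rot_ne[of "rotate i x" "i - j"] by blast
        qed
      qed
    qed
    moreover have "cyc_class x = (\<lambda>k. rotate k x) ` {..<g}" unfolding cyc_class_def using L by auto
    ultimately show ?thesis by (simp add: card_image)
  qed
  have "card S = card (\<Union>(cyc_class ` S))" using U by simp
  also have "\<dots> = sum card (cyc_class ` S)"
  proof (rule card_Union_disjoint)
    show "pairwise disjnt (cyc_class ` S)"
      unfolding pairwise_def disjnt_def
    proof (clarify)
      fix x y assume xS: "x \<in> S" and yS: "y \<in> S" and ne: "cyc_class x \<noteq> cyc_class y"
      show "cyc_class x \<inter> cyc_class y = {}"
      proof (rule ccontr)
        assume "cyc_class x \<inter> cyc_class y \<noteq> {}"
        then obtain z where "z \<in> R x" "z \<in> R y" using cs xS yS by auto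
        then have "R x = R y" using R_eq[of z x] R_eq[of z y] by simp
        then show False using ne cs xS yS by simp
      qed
    qed
    show "finite A" if "A \<in> cyc_class ` S" for A
    proof -
      have "A \<subseteq> S" using that U by blast
      then show ?thesis using finS finite_subset by auto
    qed
  qed
  also have "\<dots> = (\<Sum>c\<in>cyc_class ` S. g)" using card_c by (intro sum.cong) auto
  also have "\<dots> = g * kiss_mg D rv tl" using kiss_S by simp
  finally show ?thesis .
qed

end


context mg begin

definition F :: "'e \<Rightarrow> nat \<Rightarrow> 'e list set" where "F e L = {w. nb (e # w) \<and> length w = L}"
definition out :: "'e \<Rightarrow> 'e set" where "out e = {f\<in>D. tl f = hv e \<and> f \<noteq> rv e}"

lemma card_out: "e \<in> D \<Longrightarrow> card (out e) = d - 1"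
proof -
  assume eD: "e \<in> D"
  have "hv e \<in> V" using tlV[OF rvD[OF eD]] by (simp add: hd_of_def)
  then have c: "card {f\<in>D. tl f = hv e} = d" using reg unfolding regular_mg_def by blast
  have "out e = {f\<in>D. tl f = hv e} - {rv e}" unfolding out_def by auto
  moreover have "rv e \<in> {f\<in>D. tl f = hv e}" using rvD[OF eD] by (simp add: tl_rv)
  ultimately show ?thesis using c finD by (simp add: card_Diff_singleton)
qed

lemma finF: "finite (F e L)"
proof -
  have "F e L \<subseteq> {w. set w \<subseteq> D \<and> length w = L}" unfolding F_def nb_def by auto
  then show ?thesis using finite_lists_length_eq[OF finD] finite_subset by blast
qed

lemma F_Suc: "e \<in> D \<Longrightarrow> F e (Suc L) = (\<Union>f\<in>out e. (\<lambda>w. f # w) ` F f L)"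
proof -
  assume eD: "e \<in> D"
  show ?thesis
  proof
    show "F e (Suc L) \<subseteq> (\<Union>f\<in>out e. (\<lambda>w. f # w) ` F f L)"
    proof
      fix w assume "w \<in> F e (Suc L)"
      then obtain f w' where w: "w = f # w'" and n: "nb (e # f # w')" and l: "length w' = L"
        unfolding F_def by (cases w) auto
      then have "f \<in> out e" unfolding out_def by (auto simp: nb_Cons J_def)
      moreover have "w' \<in> F f L" using n l unfolding F_def by (simp add: nb_Cons)
      ultimately show "w \<in> (\<Union>f\<in>out e. (\<lambda>w. f # w) ` F f L)" using w by blast
    qed
    show "(\<Union>f\<in>out e. (\<lambda>w. f # w) ` F f L) \<subseteq> F e (Suc L)"
      using eD unfolding F_def out_def by (auto simp: nb_Cons J_def)
  qed
qed

lemma card_F: "e \<in> D \<Longrightarrow> card (F e L) = (d - 1) ^ L"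
proof (induction L arbitrary: e)
  case 0
  have "F e 0 = {[]}" using 0 unfolding F_def by (auto simp: nb_Cons nb_def)
  then show ?case by simp
next
  case (Suc L)
  have fo: "finite (out e)" using finD unfolding out_def by simp
  have "card (F e (Suc L)) = (\<Sum>f\<in>out e. card ((\<lambda>w. f # w) ` F f L))"
    unfolding F_Suc[OF Suc.prems] using fo finF by (intro card_UN_disjoint) auto
  also have "\<dots> = (\<Sum>f\<in>out e. (d - 1) ^ L)"
    by (intro sum.cong refl) (simp add: card_image Suc.IH out_def)
  also have "\<dots> = (d - 1) ^ Suc L" using card_out[OF Suc.prems] by simp
  finally show ?case .
qed

lemma walks_E: "E \<subseteq> D \<Longrightarrow> {w. nb w \<and> length w = Suc L \<and> hd w \<in> E} = (\<Union>e\<in>E. (\<lambda>w. e # w) ` F e L)"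
  unfolding F_def by (auto simp: length_Suc_conv)

lemma card_walks_E: "E \<subseteq> D \<Longrightarrow> card {w. nb w \<and> length w = Suc L \<and> hd w \<in> E} = card E * (d - 1) ^ L"
proof -
  assume E: "E \<subseteq> D"
  have fE: "finite E" using E finD finite_subset by blast
  have "card {w. nb w \<and> length w = Suc L \<and> hd w \<in> E} = (\<Sum>e\<in>E. card ((\<lambda>w. e # w) ` F e L))"
    unfolding walks_E[OF E] using fE finF by (intro card_UN_disjoint) auto
  also have "\<dots> = (\<Sum>e\<in>E. (d - 1) ^ L)"
    using E by (intro sum.cong refl) (auto simp: card_image card_F)
  finally show ?thesis by simp
qed

lemma finW: "finite {w. nb w \<and> length w = L}"
proof -
  have "{w. nb w \<and> length w = L} \<subseteq> {w. set w \<subseteq> D \<and> length w = L}" unfolding nb_def by auto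
  then show ?thesis using finite_lists_length_eq[OF finD] finite_subset by blast
qed

lemma card_D: "card D = card V * d"
proof -
  have "D = (\<Union>v\<in>V. {e\<in>D. tl e = v})" using tlV by auto
  then have "card D = card (\<Union>v\<in>V. {e\<in>D. tl e = v})" by simp
  also have "\<dots> = (\<Sum>v\<in>V. card {e\<in>D. tl e = v})"
    using finV finD by (intro card_UN_disjoint) auto
  also have "\<dots> = (\<Sum>v\<in>V. d)" using reg unfolding regular_mg_def by simp
  finally show ?thesis by simp
qed

lemma card_walks: "card {w. nb w \<and> length w = Suc L} = card V * d * (d - 1) ^ L"
proof -
  have "{w. nb w \<and> length w = Suc L} = {w. nb w \<and> length w = Suc L \<and> hd w \<in> D}"
    by (auto simp: nb_def length_Suc_conv)
  then show ?thesis using card_walks_E[of D L] card_D by simp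
qed

end


context mg begin

lemma wk_tl: "wk a w b \<Longrightarrow> w \<noteq> [] \<Longrightarrow> wk (hv (hd w)) (List.tl w) b"
  by (cases w) (auto simp: wk_def nb_Cons J_def)

lemma wk_butlast: "wk a w b \<Longrightarrow> w \<noteq> [] \<Longrightarrow> wk a (butlast w) (tl (last w))"
proof -
  assume A: "wk a w b" and ne: "w \<noteq> []"
  obtain w' f where w: "w = w' @ [f]" using ne by (metis rev_exhaust)
  show ?thesis using A unfolding w wk_def by (auto simp: nb_append J_def)
qed

lemma wk_nb: "nb w \<Longrightarrow> w \<noteq> [] \<Longrightarrow> wk (tl (hd w)) w (hv (last w))"
  by (simp add: wk_def)

lemma hvV: "e \<in> D \<Longrightarrow> hv e \<in> V"
  using tlV[OF rvD] by (simp add: hd_of_def)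

lemma geo_join: "wk a p b \<Longrightarrow> wk a q b \<Longrightarrow> p \<noteq> [] \<Longrightarrow> q \<noteq> [] \<Longrightarrow> hd p \<noteq> hd q \<Longrightarrow> last p \<noteq> last q
   \<Longrightarrow> geo (p @ revw q)"
proof -
  assume wp: "wk a p b" and wq: "wk a q b" and pne: "p \<noteq> []" and qne: "q \<noteq> []"
    and hdne: "hd p \<noteq> hd q" and lastne: "last p \<noteq> last q"
  have nbp: "nb p" and nbq: "nb q" using wp wq by (auto simp: wk_def)
  have pD: "set p \<subseteq> D" and qD: "set q \<subseteq> D" using nbp nbq by (auto simp: nb_def)
  have lpD: "last p \<in> D" and lqD: "last q \<in> D" and hqD: "hd q \<in> D"
    using pD qD pne qne by auto
  have r1: "hd (revw q) = rv (last q)" and r2: "last (revw q) = rv (hd q)"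
    using qne by (auto simp: revw_def hd_rev last_rev hd_map last_map)
  have "hv (last p) = tl (rv (last q))" using wp wq pne qne by (simp add: wk_def tl_rv)
  moreover have "rv (last q) \<noteq> rv (last p)" using lastne rvrv[OF lpD] rvrv[OF lqD] by metis
  moreover have "hv (rv (hd q)) = tl (hd p)" using wp wq pne qne by (simp add: wk_def hv_rv[OF hqD])
  moreover have "hd p \<noteq> rv (rv (hd q))" using hdne rvrv[OF hqD] by simp
  ultimately have "J (last p) (rv (last q)) \<and> J (rv (hd q)) (hd p)" unfolding J_def by simp
  moreover have "p @ revw q \<noteq> []" "revw q \<noteq> []" using pne qne by (auto simp: revw_def)
  ultimately show "geo (p @ revw q)" unfolding geo_iff using nbp nb_revw[OF nbq] pne r1 r2
    by (simp add: nb_append)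
qed

definition W where "W L = {w. nb w \<and> length w = L}"

lemma geo_drop: "geo ds \<Longrightarrow> 0 < k \<Longrightarrow> k < length ds \<Longrightarrow>
   wk (hv (last (take k ds))) (drop k ds) (tl (hd (take k ds)))"
proof -
  assume G: "geo ds" and k: "0 < k" "k < length ds"
  have ne: "ds \<noteq> []" and nbd: "nb ds" and J1: "J (last ds) (hd ds)" using G geo_iff by auto
  have split: "ds = take k ds @ drop k ds" by simp
  have tne: "take k ds \<noteq> []" and dne: "drop k ds \<noteq> []" using k by auto
  have "J (last (take k ds)) (hd (drop k ds))"
    using nbd tne dne nb_append[of "take k ds" "drop k ds"] by simp
  moreover have "last (drop k ds) = last ds" using k by simp
  moreover have "hd (take k ds) = hd ds" using k by simp
  ultimately show ?thesis unfolding wk_def using nb_drop[OF nbd] dne J1 by (simp add: J_def)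
qed

lemma take_inj: assumes g3: "3 \<le> g" shows "inj_on (take (Suc (g div 2))) S"
proof (rule inj_onI)
  fix x y assume xS: "x \<in> S" and yS: "y \<in> S" and e: "take (Suc (g div 2)) x = take (Suc (g div 2)) y"
  let ?k = "Suc (g div 2)"
  have gx: "geo x" "length x = g" and gy: "geo y" "length y = g" using xS yS unfolding S_def by auto
  have k: "0 < ?k" "?k < g" using g3 by auto
  have wx: "wk (hv (last (take ?k x))) (drop ?k x) (tl (hd (take ?k x)))" using geo_drop[OF gx(1)] k gx by simp
  have wy: "wk (hv (last (take ?k x))) (drop ?k y) (tl (hd (take ?k x)))" using geo_drop[OF gy(1)] k gy e by simp
  have "drop ?k x = drop ?k y"
  proof (rule ccontr)
    assume "drop ?k x \<noteq> drop ?k y"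
    moreover have "length (drop ?k x) + length (drop ?k y) < g" using gx gy g3 by simp
    ultimately show False using two_walks[OF wx wy] by blast
  qed
  then show "x = y" using e by (metis append_take_drop_id)
qed

lemma take_W: "3 \<le> g \<Longrightarrow> take (Suc (g div 2)) ` S \<subseteq> W (Suc (g div 2))"
  unfolding S_def W_def using geo_iff nb_take by auto

lemma S_bound: "3 \<le> g \<Longrightarrow> g * kiss_mg D rv tl \<le> card V * d * (d - 1) ^ (g div 2)"
proof -
  assume g3: "3 \<le> g"
  have "card S = card (take (Suc (g div 2)) ` S)" using take_inj[OF g3] by (simp add: card_image)
  also have "\<dots> \<le> card (W (Suc (g div 2)))" using take_W[OF g3] finW unfolding W_def by (intro card_mono) auto
  also have "\<dots> = card V * d * (d - 1) ^ (g div 2)" unfolding W_def by (rule card_walks)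
  finally show ?thesis using card_S by simp
qed

end


context mg begin

lemma nb_hdD: "nb w \<Longrightarrow> w \<noteq> [] \<Longrightarrow> hd w \<in> D" and nb_lastD: "nb w \<Longrightarrow> w \<noteq> [] \<Longrightarrow> last w \<in> D"
  unfolding nb_def by auto

definition A1 :: "'v \<Rightarrow> nat \<Rightarrow> 'e list set" where
  "A1 v r = {w. nb w \<and> length w \<le> r \<and> (w \<noteq> [] \<longrightarrow> tl (hd w) = v)}"

definition ep :: "'v \<Rightarrow> 'e list \<Rightarrow> 'v" where "ep v w = (if w = [] then v else hv (last w))"

lemma A1_wk: "w \<in> A1 v r \<Longrightarrow> wk v w (ep v w)"
  unfolding A1_def ep_def wk_def by auto

lemma A1_inj: "2 * r < g \<Longrightarrow> inj_on (ep v) (A1 v r)"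
proof (rule inj_onI, rule ccontr)
  fix x y assume r: "2 * r < g" and x: "x \<in> A1 v r" and y: "y \<in> A1 v r" and e: "ep v x = ep v y" and ne: "x \<noteq> y"
  have "wk v x (ep v x)" "wk v y (ep v x)" using A1_wk[OF x] A1_wk[OF y] e by auto
  moreover have "length x + length y < g" using x y r unfolding A1_def by auto
  ultimately show False using two_walks ne by blast
qed

lemma A1_sub: "v \<in> V \<Longrightarrow> ep v ` A1 v r \<subseteq> V"
  unfolding A1_def ep_def using hvV nb_lastD by auto

lemma finA1: "finite (A1 v r)"
proof -
  have "A1 v r \<subseteq> {w. set w \<subseteq> D \<and> length w \<le> r}" unfolding A1_def nb_def by auto
  then show ?thesis using finite_lists_length_le[OF finD] finite_subset by blast
qed

lemma card_A1: "v \<in> V \<Longrightarrow> card (A1 v r) = 1 + d * (\<Sum>L<r. (d - 1) ^ L)"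
proof (induction r)
  case 0
  have "A1 v 0 = {[]}" unfolding A1_def by (auto simp: nb_def)
  then show ?case by simp
next
  case (Suc r)
  let ?E = "{e\<in>D. tl e = v}"
  have cE: "card ?E = d" using reg Suc.prems unfolding regular_mg_def by blast
  have "A1 v (Suc r) = A1 v r \<union> {w. nb w \<and> length w = Suc r \<and> hd w \<in> ?E}"
  proof
    show "A1 v (Suc r) \<subseteq> A1 v r \<union> {w. nb w \<and> length w = Suc r \<and> hd w \<in> ?E}"
    proof
      fix x assume "x \<in> A1 v (Suc r)"
      then have x: "nb x" "length x \<le> Suc r" "x \<noteq> [] \<longrightarrow> tl (hd x) = v" unfolding A1_def by auto
      show "x \<in> A1 v r \<union> {w. nb w \<and> length w = Suc r \<and> hd w \<in> ?E}"
      proof (cases "length x = Suc r")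
        case True
        then have "x \<noteq> []" by auto
        then show ?thesis using x True nb_hdD by auto
      next
        case False
        then show ?thesis using x unfolding A1_def by auto
      qed
    qed
    show "A1 v r \<union> {w. nb w \<and> length w = Suc r \<and> hd w \<in> ?E} \<subseteq> A1 v (Suc r)"
      unfolding A1_def by auto
  qed
  moreover have "A1 v r \<inter> {w. nb w \<and> length w = Suc r \<and> hd w \<in> ?E} = {}" unfolding A1_def by auto
  moreover have "finite {w. nb w \<and> length w = Suc r \<and> hd w \<in> ?E}"
    using finW[of "Suc r"] by (rule finite_subset[rotated]) auto
  ultimately have "card (A1 v (Suc r)) = card (A1 v r) + card {w. nb w \<and> length w = Suc r \<and> hd w \<in> ?E}"
    using finA1 by (simp add: card_Un_disjoint)
  also have "\<dots> = card (A1 v r) + d * (d - 1) ^ r" using card_walks_E[of ?E r] cE by simp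
  finally show ?case using Suc.IH Suc.prems by (simp add: algebra_simps)
qed

lemma moore_odd: "v \<in> V \<Longrightarrow> 2 * r < g \<Longrightarrow> 1 + d * (\<Sum>L<r. (d - 1) ^ L) \<le> card V"
  using card_inj_on_le[OF A1_inj A1_sub finV] card_A1 by metis

lemma moore_odd_eq: "v \<in> V \<Longrightarrow> 2 * r < g \<Longrightarrow> 1 + d * (\<Sum>L<r. (d - 1) ^ L) = card V \<Longrightarrow> ep v ` A1 v r = V"
proof -
  assume v: "v \<in> V" and r: "2 * r < g" and c: "1 + d * (\<Sum>L<r. (d - 1) ^ L) = card V"
  have "card (ep v ` A1 v r) = card V" using card_image[OF A1_inj[OF r]] card_A1[OF v] c by simp
  then show ?thesis using A1_sub[OF v] finV by (metis card_subset_eq)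
qed

lemma surj_odd:
  assumes g: "g = 2 * r + 1" and r1: "1 \<le> r" and V0: "V \<noteq> {}"
    and c: "1 + d * (\<Sum>L<r. (d - 1) ^ L) = card V"
  shows "W (Suc r) \<subseteq> take (Suc r) ` S"
proof
  fix w assume "w \<in> W (Suc r)"
  then have nbw: "nb w" and lw: "length w = Suc r" unfolding W_def by auto
  have wne: "w \<noteq> []" using lw by auto
  let ?v = "tl (hd w)" and ?u = "hv (last w)"
  have wD: "set w \<subseteq> D" using nbw by (simp add: nb_def)
  have v: "?v \<in> V" using nb_hdD[OF nbw wne] tlV by auto
  have u: "?u \<in> V" using nb_lastD[OF nbw wne] hvV by auto
  have ww: "wk ?v w ?u" using wk_nb[OF nbw wne] .
  have rg: "2 * r < g" using g by simp
  obtain p where pA: "p \<in> A1 ?v r" and pu: "ep ?v p = ?u"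
    using moore_odd_eq[OF v rg c] u by (metis imageE)
  have wp: "wk ?v p ?u" using A1_wk[OF pA] pu by simp
  have lp: "length p \<le> r" using pA unfolding A1_def by simp
  have pne: "p \<noteq> []"
  proof
    assume "p = []"
    then have "?u = ?v" using wp by (simp add: wk_def)
    then show False using closed_short[of ?v w] ww wne lw g r1 by simp
  qed
  have p0: "0 < length p" using pne by simp
  have hdne: "hd w \<noteq> hd p"
  proof
    assume h: "hd w = hd p"
    have "wk (hv (hd w)) (List.tl w) ?u" using wk_tl[OF ww wne] .
    moreover have "wk (hv (hd w)) (List.tl p) ?u" using wk_tl[OF wp pne] h by simp
    moreover have "length (List.tl w) = r" "length (List.tl p) < r" using lw lp p0 by (simp only: length_tl; linarith)+
    then have "List.tl w \<noteq> List.tl p" by (metis less_irrefl)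
    moreover have "length (List.tl w) + length (List.tl p) < g" using lw lp g by simp
    ultimately show False using two_walks by blast
  qed
  have lastne: "last w \<noteq> last p"
  proof
    assume h: "last w = last p"
    have "wk ?v (butlast w) (tl (last w))" using wk_butlast[OF ww wne] .
    moreover have "wk ?v (butlast p) (tl (last w))" using wk_butlast[OF wp pne] h by simp
    moreover have "length (butlast w) = r" "length (butlast p) < r" using lw lp p0 by (simp only: length_butlast; linarith)+
    then have "butlast w \<noteq> butlast p" by (metis less_irrefl)
    moreover have "length (butlast w) + length (butlast p) < g" using lw lp g by simp
    ultimately show False using two_walks by blast
  qed
  have G: "geo (w @ revw p)" using geo_join[OF ww wp wne pne hdne lastne] .
  have "length (w @ revw p) \<le> g" using lw lp g by simp
  then have "length (w @ revw p) = g" using girth_le[OF G] by simp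
  then have "w @ revw p \<in> S" using G unfolding S_def by simp
  moreover have "take (Suc r) (w @ revw p) = w" using lw by simp
  ultimately show "w \<in> take (Suc r) ` S" by (metis image_eqI)
qed

end


context mg begin

definition Fr :: "'e \<Rightarrow> nat \<Rightarrow> 'e list set" where "Fr e r = {w. nb (e # w) \<and> length w < r}"

lemma card_Fr: "e \<in> D \<Longrightarrow> card (Fr e r) = (\<Sum>L<r. (d - 1) ^ L)"
proof (induction r)
  case 0
  have "Fr e 0 = {}" unfolding Fr_def by auto
  then show ?case by simp
next
  case (Suc r)
  have "Fr e (Suc r) = Fr e r \<union> F e r" unfolding Fr_def F_def by (auto simp: less_Suc_eq)
  moreover have "Fr e r \<inter> F e r = {}" unfolding Fr_def F_def by auto
  moreover have "finite (Fr e r)"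
  proof -
    have "Fr e r \<subseteq> (\<Union>L<r. F e L)" unfolding Fr_def F_def by auto
    then show ?thesis using finF by (meson finite_UN_I finite_lessThan finite_subset)
  qed
  ultimately have "card (Fr e (Suc r)) = card (Fr e r) + card (F e r)"
    using finF by (simp add: card_Un_disjoint)
  then show ?case using Suc card_F by simp
qed

lemma finFr: "finite (Fr e r)"
proof -
  have "Fr e r \<subseteq> (\<Union>L<r. F e L)" unfolding Fr_def F_def by auto
  then show ?thesis using finF by (meson finite_UN_I finite_lessThan finite_subset)
qed

definition A2 :: "'e \<Rightarrow> nat \<Rightarrow> 'e list set" where
  "A2 e r = (\<lambda>w. e # w) ` Fr e r \<union> (\<lambda>w. rv e # w) ` Fr (rv e) r"

lemma card_A2: "e \<in> D \<Longrightarrow> card (A2 e r) = 2 * (\<Sum>L<r. (d - 1) ^ L)"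
proof -
  assume eD: "e \<in> D"
  have "(\<lambda>w. e # w) ` Fr e r \<inter> (\<lambda>w. rv e # w) ` Fr (rv e) r = {}" using rvne[OF eD] by auto
  then have "card (A2 e r) = card ((\<lambda>w. e # w) ` Fr e r) + card ((\<lambda>w. rv e # w) ` Fr (rv e) r)"
    unfolding A2_def using finFr by (simp add: card_Un_disjoint)
  then show ?thesis using card_Fr eD rvD[OF eD] by (simp add: card_image)
qed

lemma wk_Cons_tail: "nb (e # p) \<Longrightarrow> wk (hv e) p (hv (last (e # p)))"
  unfolding wk_def by (cases p) (auto simp: nb_Cons J_def)

lemma inj_same: "nb (e # p) \<Longrightarrow> nb (e # q) \<Longrightarrow> hv (last (e # p)) = hv (last (e # q)) \<Longrightarrow> p \<noteq> q
   \<Longrightarrow> length p + length q < g \<Longrightarrow> False"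
  using wk_Cons_tail two_walks by metis

lemma inj_cross: "nb (e # p) \<Longrightarrow> nb (rv e # q) \<Longrightarrow> hv (last (e # p)) = hv (last (rv e # q))
   \<Longrightarrow> length p + length q + 1 < g \<Longrightarrow> False"
proof -
  assume np: "nb (e # p)" and nq: "nb (rv e # q)" and h: "hv (last (e # p)) = hv (last (rv e # q))"
    and l: "length p + length q + 1 < g"
  have eD: "e \<in> D" using np by (simp add: nb_Cons)
  have w1: "wk (tl e) (e # p) (hv (last (e # p)))" using wk_nb[OF np] by simp
  have w2: "wk (tl e) q (hv (last (e # p)))" using wk_Cons_tail[OF nq] h hv_rv[OF eD] by simp
  have ne: "e # p \<noteq> q"
  proof
    assume q: "e # p = q"
    then have "J (rv e) e" using nq by (auto simp: nb_Cons)
    then show False using rvrv[OF eD] by (simp add: J_def)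
  qed
  show False using two_walks[OF w1 w2 ne] l by simp
qed

lemma A2_inj: "2 * r \<le> g \<Longrightarrow> inj_on (\<lambda>w. hv (last w)) (A2 e r)"
proof (rule inj_onI, rule ccontr)
  fix x y assume r: "2 * r \<le> g" and x: "x \<in> A2 e r" and y: "y \<in> A2 e r"
    and h: "hv (last x) = hv (last y)" and ne: "x \<noteq> y"
  show False using x y
    unfolding A2_def Fr_def
  proof (elim UnE imageE CollectE conjE)
    fix p q assume "x = e # p" "y = e # q" "nb (e # p)" "nb (e # q)" "length p < r" "length q < r"
    then show False using inj_same[of e p q] h ne r by auto
  next
    fix p q assume "x = rv e # p" "y = rv e # q" "nb (rv e # p)" "nb (rv e # q)" "length p < r" "length q < r"
    then show False using inj_same[of "rv e" p q] h ne r by auto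
  next
    fix p q assume "x = e # p" "y = rv e # q" "nb (e # p)" "nb (rv e # q)" "length p < r" "length q < r"
    then show False using inj_cross[of e p q] h r by auto
  next
    fix p q assume "x = rv e # p" "y = e # q" "nb (rv e # p)" "nb (e # q)" "length p < r" "length q < r"
    then show False using inj_cross[of e q p] h r by auto
  qed
qed

lemma A2_sub: "e \<in> D \<Longrightarrow> (\<lambda>w. hv (last w)) ` A2 e r \<subseteq> V"
proof
  fix x assume "x \<in> (\<lambda>w. hv (last w)) ` A2 e r"
  then obtain w where w: "w \<in> A2 e r" "x = hv (last w)" by blast
  then have "nb w" "w \<noteq> []" unfolding A2_def Fr_def by auto
  then show "x \<in> V" using w nb_lastD hvV by auto
qed

lemma moore_even: "e \<in> D \<Longrightarrow> 2 * r \<le> g \<Longrightarrow> 2 * (\<Sum>L<r. (d - 1) ^ L) \<le> card V"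
  using card_inj_on_le[OF A2_inj A2_sub finV] card_A2 by metis

lemma moore_even_eq: "e \<in> D \<Longrightarrow> 2 * r \<le> g \<Longrightarrow> 2 * (\<Sum>L<r. (d - 1) ^ L) = card V \<Longrightarrow> (\<lambda>w. hv (last w)) ` A2 e r = V"
proof -
  assume e: "e \<in> D" and r: "2 * r \<le> g" and c: "2 * (\<Sum>L<r. (d - 1) ^ L) = card V"
  have "card ((\<lambda>w. hv (last w)) ` A2 e r) = card V" using card_image[OF A2_inj[OF r]] card_A2[OF e] c by simp
  then show ?thesis using A2_sub[OF e] finV by (metis card_subset_eq)
qed

end


context mg begin

lemma surj_even:
  assumes g: "g = 2 * r" and r2: "2 \<le> r"
    and c: "2 * (\<Sum>L<r. (d - 1) ^ L) = card V"
  shows "W (Suc r) \<subseteq> take (Suc r) ` S"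
proof
  fix w assume "w \<in> W (Suc r)"
  then have nbw: "nb w" and lw: "length w = Suc r" unfolding W_def by auto
  have wne: "w \<noteq> []" using lw by auto
  let ?f = "last w"
  let ?v = "tl (hd w)" and ?u = "hv ?f"
  have fD: "?f \<in> D" using nb_lastD[OF nbw wne] .
  have v: "?v \<in> V" using nb_hdD[OF nbw wne] tlV by auto
  have ww: "wk ?v w ?u" using wk_nb[OF nbw wne] .
  obtain x where xA: "x \<in> A2 ?f r" and xv: "hv (last x) = ?v"
    using moore_even_eq[OF fD _ c] v g by (metis imageE order_refl)
  show "w \<in> take (Suc r) ` S"
    using xA unfolding A2_def Fr_def
  proof (elim UnE imageE CollectE conjE)
    fix q assume x: "x = rv ?f # q" and nq: "nb (rv ?f # q)" and lq: "length q < r"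
    have w1: "wk (tl ?f) q ?v" using wk_Cons_tail[OF nq] xv x hv_rv[OF fD] by simp
    have w2: "wk (tl ?f) (revw (butlast w)) ?v" using wk_revw[OF wk_butlast[OF ww wne]] .
    have "length (revw (butlast w)) = r" using lw by simp
    then have "q \<noteq> revw (butlast w)" using lq by auto
    then show ?thesis using two_walks[OF w1 w2] lq lw g by simp
  next
    fix p assume x: "x = ?f # p" and np: "nb (?f # p)" and lp: "length p < r"
    have wp: "wk ?u p ?v" using wk_Cons_tail[OF np] xv x by simp
    have pne: "p \<noteq> []"
    proof
      assume "p = []"
      then have "?u = ?v" using wp by (simp add: wk_def)
      then show False using closed_short[of ?v w] ww wne lw g r2 by simp
    qed
    have p0: "0 < length p" using pne by simp
    have lpD: "last p \<in> D" using np pne nb_lastD[of p] by (simp add: nb_Cons)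
    have base: "hd w \<noteq> rv (last p)"
    proof
      assume h: "hd w = rv (last p)"
      have w1: "wk (hv (hd w)) (List.tl w) ?u" using wk_tl[OF ww wne] .
      have "tl (last p) = hv (hd w)" using h hv_rv[OF lpD] by simp
      then have w2: "wk (hv (hd w)) (revw (butlast p)) ?u" using wk_revw[OF wk_butlast[OF wp pne]] by simp
      have "length (List.tl w) = r" "length (revw (butlast p)) < r" using lw lp p0
        by (simp only: length_tl length_revw length_butlast; linarith)+
      then have "List.tl w \<noteq> revw (butlast p)" by (metis less_irrefl)
      then show False using two_walks[OF w1 w2] \<open>length (List.tl w) = r\<close> \<open>length (revw (butlast p)) < r\<close> g
        by simp
    qed
    have "nb p" using np by (simp add: nb_Cons)
    moreover have "J ?f (hd p)" using np pne by (simp add: nb_Cons)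
    moreover have "hv (last p) = ?v" using wp pne by (simp add: wk_def)
    ultimately have G: "geo (w @ p)" unfolding geo_iff using nbw pne wne base
      by (simp add: nb_append J_def)
    have "length (w @ p) \<le> g" using lw lp g by simp
    then have "length (w @ p) = g" using girth_le[OF G] by simp
    then have "w @ p \<in> S" using G unfolding S_def by simp
    moreover have "take (Suc r) (w @ p) = w" using lw by simp
    ultimately show "w \<in> take (Suc r) ` S" by (metis image_eqI)
  qed
qed

lemma S_eq: "3 \<le> g \<Longrightarrow> W (Suc (g div 2)) \<subseteq> take (Suc (g div 2)) ` S \<Longrightarrow> g * kiss_mg D rv tl = card V * d * (d - 1) ^ (g div 2)"
proof -
  assume g3: "3 \<le> g" and sub: "W (Suc (g div 2)) \<subseteq> take (Suc (g div 2)) ` S"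
  have "take (Suc (g div 2)) ` S = W (Suc (g div 2))" using sub take_W[OF g3] by blast
  then have "card S = card (W (Suc (g div 2)))" using take_inj[OF g3] by (metis card_image)
  then show ?thesis using card_S card_walks unfolding W_def by simp
qed

end



lemma geo_sum_real: fixes b :: real shows "(b - 1) * (\<Sum>L<r. b ^ L) = b ^ r - 1"
  by (induction r) (auto simp: algebra_simps)

lemma real_odd:
  fixes N dd K b x0 m :: real and r :: nat
  assumes dd: "dd \<ge> 3" and b: "b = dd - 1" and x0: "x0 = b ^ r" and r: "1 \<le> r"
    and m: "m = N * (dd - 2) + 2" and mx: "m \<ge> dd * x0"
    and K: "(2 * real r + 1) * K \<le> N * dd * x0" and N: "N > 0"
  shows "K \<le> N * m / (2 * log b (m / dd) + 1) \<and>
         (K = N * m / (2 * log b (m / dd) + 1) \<longleftrightarrow> ((2 * real r + 1) * K = N * dd * x0 \<and> m = dd * x0))"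
proof -
  have b2: "b \<ge> 2" using dd b by simp
  have "b ^ 1 \<le> b ^ r" using b2 r by (intro power_increasing) auto
  then have x0b: "x0 \<ge> b" unfolding x0 by simp
  have lx0: "log b x0 = r" unfolding x0 using b2 by (simp add: log_nat_power)
  define x where "x = m / dd"
  have xx0: "x \<ge> x0" using mx dd unfolding x_def by (simp add: le_divide_eq mult.commute)
  have mdx: "m = dd * x" unfolding x_def using dd by simp
  define phi where "phi t = t / (2 * log b t + 1)" for t
  have B: "N * m / (2 * log b (m / dd) + 1) = N * dd * phi x" unfolding phi_def x_def[symmetric] mdx by simp
  have p0: "phi x0 = x0 / (2 * r + 1)" unfolding phi_def lx0 by simp
  have c: "N * dd > 0" using N dd by simp
  have Kp: "K \<le> N * dd * phi x0" using K unfolding p0 by (simp add: field_simps)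
  have KE: "K = N * dd * phi x0 \<longleftrightarrow> (2 * real r + 1) * K = N * dd * x0" unfolding p0 by (auto simp: field_simps)
  show ?thesis
  proof (cases "x = x0")
    case True
    then show ?thesis using Kp KE B mdx by auto
  next
    case False
    then have "x0 < x" using xx0 by simp
    then have "phi x0 < phi x" unfolding phi_def using phi_mono[OF b2 x0b] by blast
    then have "N * dd * phi x0 < N * dd * phi x" using c by (rule mult_strict_left_mono)
    then show ?thesis using Kp B False mdx dd by auto
  qed
qed

lemma real_even:
  fixes N dd K b x0 m :: real and r :: nat
  assumes dd: "dd \<ge> 3" and b: "b = dd - 1" and x0: "x0 = b ^ r" and r: "2 \<le> r"
    and m: "m = N * (dd - 2) + 2" and mx: "m \<ge> 2 * x0"
    and K: "(2 * real r) * K \<le> N * dd * x0" and N: "N > 0"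
  shows "K \<le> N * dd * m / (4 * log b (m / 2)) \<and>
         (K = N * dd * m / (4 * log b (m / 2)) \<longleftrightarrow> ((2 * real r) * K = N * dd * x0 \<and> m = 2 * x0))"
proof -
  have b2: "b \<ge> 2" using dd b by simp
  have "b ^ 2 \<le> b ^ r" using b2 r by (intro power_increasing) auto
  moreover have "2 * 2 \<le> b * b" using b2 by (intro mult_mono) auto
  then have "4 \<le> b ^ 2" by (simp add: power2_eq_square)
  ultimately have x04: "x0 \<ge> 4" unfolding x0 by linarith
  have lx0: "log b x0 = r" unfolding x0 using b2 by (simp add: log_nat_power)
  define x where "x = m / 2"
  have xx0: "x \<ge> x0" using mx unfolding x_def by simp
  have mdx: "m = 2 * x" unfolding x_def by simp
  define psi where "psi t = t / log b t" for t
  have B: "N * dd * m / (4 * log b (m / 2)) = (N * dd / 2) * psi x" unfolding psi_def x_def[symmetric] mdx by simp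
  have p0: "psi x0 = x0 / r" unfolding psi_def lx0 by simp
  have c: "N * dd / 2 > 0" using N dd by simp
  have r0: "real r > 0" using r by simp
  have Kp: "K \<le> (N * dd / 2) * psi x0" using K r0 unfolding p0 by (simp add: field_simps)
  have KE: "K = (N * dd / 2) * psi x0 \<longleftrightarrow> (2 * real r) * K = N * dd * x0" unfolding p0 using r0 by (auto simp: field_simps)
  show ?thesis
  proof (cases "x = x0")
    case True
    then show ?thesis using Kp KE B mdx by auto
  next
    case False
    then have "x0 < x" using xx0 by simp
    then have "psi x0 < psi x" unfolding psi_def using psi_mono[OF b2 x04] by blast
    then have "(N * dd / 2) * psi x0 < (N * dd / 2) * psi x" using c by (rule mult_strict_left_mono)
    then show ?thesis using Kp B False mdx by auto
  qed
qed




theorem corollary1p2: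
  fixes V :: "'v set" and D :: "'e set" and rv :: "'e \<Rightarrow> 'e" and tail :: "'e \<Rightarrow> 'v"
    and d :: nat
  assumes "mgraph V D rv tail"
    and "d \<ge> 3"
    and "connected_mg V D rv tail"
    and "regular_mg V D tail d"
    and "girth_mg D rv tail \<ge> 3"
  shows "let n = real (card V); g = girth_mg D rv tail; k = real (kiss_mg D rv tail);
             m = n * (real d - 2) + 2 in
         (odd g \<longrightarrow>
            (let B = n * m / (2 * log (real d - 1) (m / real d) + 1) in
               k \<le> B \<and> (k = B \<longleftrightarrow> moore_graph V D rv tail))) \<and>
         (even g \<longrightarrow>
            (let B = n * real d * m / (4 * log (real d - 1) (m / 2)) in
               k \<le> B \<and> (k = B \<longleftrightarrow> moore_graph V D rv tail)))"
proof -
  interpret mg V D rv tail d using assms(1,4) by unfold_locales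
  have d3: "d \<ge> 3" and g3: "3 \<le> g" using assms by auto
  have Vne: "V \<noteq> {}" using assms(3) unfolding connected_mg_def by simp
  then obtain v where v: "v \<in> V" by blast
  define r where "r = g div 2"
  define n where "n = card V"
  define K where "K = kiss_mg D rv tail"
  define s where "s = (\<Sum>L<r. (d - 1) ^ L)"
  define N where "N = real n"
  define dd where "dd = real d"
  define b where "b = dd - 1"
  define sR where "sR = (\<Sum>L<r. b ^ L)"
  define m where "m = N * (dd - 2) + 2"
  have N0: "N > 0" using finV Vne unfolding N_def n_def by (simp add: card_gt_0_iff)
  have dd3: "dd \<ge> 3" using d3 unfolding dd_def by simp
  have sRs: "real s = sR" unfolding s_def sR_def b_def dd_def using d3 by (simp add: of_nat_diff)
  have gs: "(dd - 2) * sR = b ^ r - 1" using geo_sum_real[of b r] unfolding sR_def b_def by (simp add: algebra_simps)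
  have F1: "g * K \<le> n * d * (d - 1) ^ r" using S_bound[OF g3] unfolding K_def n_def r_def .
  have d1: "1 \<le> d" using d3 by simp
  have "real (g * K) \<le> real (n * d * (d - 1) ^ r)" using F1 by (simp only: of_nat_le_iff)
  then have F1R: "real g * real K \<le> N * dd * b ^ r" unfolding N_def dd_def b_def using d1 by (simp add: of_nat_diff)
  have moore_iff: "moore_graph V D rv tail \<longleftrightarrow> n = moore_number d g"
  proof
    assume "moore_graph V D rv tail"
    then obtain d' where r': "regular_mg V D tail d'" and c': "card V = moore_number d' g"
      unfolding moore_graph_def by blast
    have "d' = d" using r' reg v unfolding regular_mg_def by metis
    then show "n = moore_number d g" using c' unfolding n_def by simp
  next
    assume "n = moore_number d g"
    then show "moore_graph V D rv tail" unfolding moore_graph_def n_def using assms(3) reg by blast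
  qed
  have Kreal: "real (kiss_mg D rv tail) = real K" unfolding K_def ..
  have P1: "odd g \<Longrightarrow> real K \<le> N * m / (2 * log (real d - 1) (m / dd) + 1) \<and> ((real K = N * m / (2 * log (real d - 1) (m / dd) + 1)) = moore_graph V D rv tail)"

  proof -
    assume og: "odd g"
    have gr: "g = 2 * r + 1" using odd_two_times_div_two_succ[OF og] unfolding r_def by simp
    have r1: "1 \<le> r" using gr g3 by linarith
    have MN: "moore_number d g = 1 + d * s"
    proof -
      have "(g - 3) div 2 = r - 1" using gr by simp
      moreover have "{..r - 1} = {..<r}" using r1 by auto
      ultimately show ?thesis using og unfolding moore_number_def s_def by simp
    qed
    have F2: "1 + d * s \<le> n" using moore_odd[OF v, of r] gr unfolding s_def n_def by simp
    have F3: "1 + d * s = n \<Longrightarrow> g * K = n * d * (d - 1) ^ r"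
      using S_eq[OF g3] surj_odd[OF gr r1 Vne] unfolding r_def[symmetric] s_def n_def K_def by simp
    have "real (1 + d * s) \<le> real n" using F2 by (simp only: of_nat_le_iff)
    then have F2R: "1 + dd * sR \<le> N" using sRs unfolding N_def dd_def by simp
    have ge: "N * (dd - 2) \<ge> (1 + dd * sR) * (dd - 2)" using F2R dd3 by (intro mult_right_mono) auto
    have E1: "(1 + dd * sR) * (dd - 2) + 2 = dd * b ^ r"
    proof -
      have "(1 + dd * sR) * (dd - 2) + 2 = dd + dd * ((dd - 2) * sR)" by (simp add: algebra_simps)
      also have "\<dots> = dd * b ^ r" unfolding gs by (simp add: algebra_simps)
      finally show ?thesis .
    qed
    have mx: "m \<ge> dd * b ^ r" unfolding m_def using E1 ge by linarith
    have meq: "m = dd * b ^ r \<longleftrightarrow> n = 1 + d * s"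
    proof
      assume "m = dd * b ^ r"
      then have "N * (dd - 2) = (1 + dd * sR) * (dd - 2)" unfolding m_def using E1 by linarith
      then have "N = 1 + dd * sR" using dd3 by simp
      then have "real n = real (1 + d * s)" using sRs unfolding N_def dd_def by simp
      then show "n = 1 + d * s" by (simp only: of_nat_eq_iff)
    next
      assume "n = 1 + d * s"
      then have "N = 1 + dd * sR" using sRs unfolding N_def dd_def by simp
      then show "m = dd * b ^ r" unfolding m_def using E1 by simp
    qed
    have KR: "(2 * real r + 1) * real K \<le> N * dd * b ^ r" using F1R gr by (simp add: add.commute)
    note R = real_odd[OF dd3 b_def refl r1 m_def mx KR N0]
    have bb: "real d - 1 = b" unfolding b_def dd_def ..
    have c1: "real K \<le> N * m / (2 * log (real d - 1) (m / dd) + 1)" using R bb by simp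
    have c2: "(real K = N * m / (2 * log (real d - 1) (m / dd) + 1)) = moore_graph V D rv tail"
    proof -
      have "(real K = N * m / (2 * log b (m / dd) + 1)) \<longleftrightarrow> n = 1 + d * s"
      proof
        assume "real K = N * m / (2 * log b (m / dd) + 1)"
        then show "n = 1 + d * s" using R meq by blast
      next
        assume h: "n = 1 + d * s"
        then have "g * K = n * d * (d - 1) ^ r" using F3 by simp
        then have "real (g * K) = real (n * d * (d - 1) ^ r)" by simp
        then have "(2 * real r + 1) * real K = N * dd * b ^ r" using gr d1 unfolding N_def dd_def b_def
          by (simp add: of_nat_diff algebra_simps)
        then show "real K = N * m / (2 * log b (m / dd) + 1)" using R meq h by blast
      qed
      then show ?thesis using moore_iff MN bb by simp
    qed
    from c1 c2 show ?thesis by blast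
  qed
  have P2: "even g \<Longrightarrow> real K \<le> N * dd * m / (4 * log (real d - 1) (m / 2)) \<and> ((real K = N * dd * m / (4 * log (real d - 1) (m / 2))) = moore_graph V D rv tail)"
  proof -
    assume eg: "even g"
    have gr: "g = 2 * r" using even_two_times_div_two[OF eg] unfolding r_def by simp
    have r2: "2 \<le> r" using gr g3 by linarith
    have MN: "moore_number d g = 2 * s"
    proof -
      have "(g - 2) div 2 = r - 1" using gr by simp
      moreover have "{..r - 1} = {..<r}" using r2 by auto
      ultimately show ?thesis using eg unfolding moore_number_def s_def by simp
    qed
    obtain e where eD: "e \<in> D"
    proof -
      have "card {e\<in>D. tail e = v} = d" using reg v unfolding regular_mg_def by blast
      then have "{e\<in>D. tail e = v} \<noteq> {}" using d3 by (metis card.empty not_numeral_le_zero)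
      then show ?thesis using that by blast
    qed
    have F2: "2 * s \<le> n" using moore_even[OF eD, of r] gr unfolding s_def n_def by simp
    have F3: "2 * s = n \<Longrightarrow> g * K = n * d * (d - 1) ^ r"
      using S_eq[OF g3] surj_even[OF gr r2] unfolding r_def[symmetric] s_def n_def K_def by simp
    have "real (2 * s) \<le> real n" using F2 by (simp only: of_nat_le_iff)
    then have F2R: "2 * sR \<le> N" using sRs unfolding N_def dd_def by simp
    have ge: "N * (dd - 2) \<ge> (2 * sR) * (dd - 2)" using F2R dd3 by (intro mult_right_mono) auto
    have E2: "(2 * sR) * (dd - 2) + 2 = 2 * b ^ r"
    proof -
      have "(2 * sR) * (dd - 2) + 2 = 2 + 2 * ((dd - 2) * sR)" by (simp add: algebra_simps)
      also have "\<dots> = 2 * b ^ r" unfolding gs by (simp add: algebra_simps)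
      finally show ?thesis .
    qed
    have mx: "m \<ge> 2 * b ^ r" unfolding m_def using E2 ge by linarith
    have meq: "m = 2 * b ^ r \<longleftrightarrow> n = 2 * s"
    proof
      assume "m = 2 * b ^ r"
      then have "N * (dd - 2) = (2 * sR) * (dd - 2)" unfolding m_def using E2 by linarith
      then have "N = 2 * sR" using dd3 by simp
      then have "real n = real (2 * s)" using sRs unfolding N_def dd_def by simp
      then show "n = 2 * s" by (simp only: of_nat_eq_iff)
    next
      assume "n = 2 * s"
      then have "N = 2 * sR" using sRs unfolding N_def dd_def by simp
      then show "m = 2 * b ^ r" unfolding m_def using E2 by simp
    qed
    have KR: "(2 * real r) * real K \<le> N * dd * b ^ r" using F1R gr by simp
    note R = real_even[OF dd3 b_def refl r2 m_def mx KR N0]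
    have bb: "real d - 1 = b" unfolding b_def dd_def ..
    have c1: "real K \<le> N * dd * m / (4 * log (real d - 1) (m / 2))" using R bb by simp
    have c2: "(real K = N * dd * m / (4 * log (real d - 1) (m / 2))) = moore_graph V D rv tail"
    proof -
      have "(real K = N * dd * m / (4 * log b (m / 2))) \<longleftrightarrow> n = 2 * s"
      proof
        assume "real K = N * dd * m / (4 * log b (m / 2))"
        then show "n = 2 * s" using R meq by blast
      next
        assume h: "n = 2 * s"
        then have "g * K = n * d * (d - 1) ^ r" using F3 by simp
        then have "real (g * K) = real (n * d * (d - 1) ^ r)" by simp
        then have "(2 * real r) * real K = N * dd * b ^ r" using gr d1 unfolding N_def dd_def b_def
          by (simp add: of_nat_diff)
        then show "real K = N * dd * m / (4 * log b (m / 2))" using R meq h by blast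
      qed
      then show ?thesis using moore_iff MN bb by simp
    qed
    from c1 c2 show ?thesis by blast
  qed
  show ?thesis unfolding Let_def using P1 P2 unfolding m_def N_def dd_def n_def K_def by blast
qed



end
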